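(* Let $\mathcal C\subseteq 2^{[n]}$ be a degree two code and let $i,j\in[n]$ with $j<i$ in $P(\mathcal C)$. Then $N(j)\subseteq I(i)\cup N(i)$.
   Context: A code is a set $\mathcal C\subseteq 2^{[n]}$, $[n]=\{1,\dots,n\}$. Standing conventions: $\emptyset\in\mathcal C$; every neuron lies in some codeword; no two distinct neurons lie in exactly the same codewords. A pseudo-monomial in $\mathbb F_2[x_1,\dots,x_n]$ is $\prod_{a\in\alpha}x_a\prod_{b\in\beta}(1-x_b)$ with $\alpha\cap\beta=\emptyset$, ordered by divisibility. $J_\mathcal C=\langle\rho_\gamma:\gamma\notin\mathcal C\rangle$ with $\rho_\gamma=\prod_{a\in\gamma}x_a\prod_{b\notin\gamma}(1-x_b)$; $\mathrm{CF}(J_\mathcal C)$ is the set of minimal pseudo-monomials in $J_\mathcal C$. $\mathcal C$ is degree two if every element of $\mathrm{CF}(J_\mathcal C)$ has degree two. $G(\mathcal C)$ is the graph on $[n]$ with edge $ab$ whenever $\mathrm{CF}(J_\mathcal C)$ has no pseudo-monomial whose two variables are $x_a,x_b$; $P(\mathcal C)$ is the partial order on $[n]$ with $a<b$ iff $x_a(1-x_b)\in\mathrm{CF}(J_\mathcal C)$. $N(a)$ is the set of neighbors of $a$ in $G(\mathcal C)$ and $I(a)=\{b: b<a \text{ in } P(\mathcal C)\}$. *)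

theory Defs
  imports "HOL-Library.Poly_Mapping" "HOL-Library.Z2"
begin

text \<open>Polynomials in F_2[x_1,...,x_n] (variables indexed by nat): finitely supported maps
  from monomials (exponent vectors nat =>0 nat) to coefficients in F_2 (type bit).\<close>
type_synonym poly2 = "(nat \<Rightarrow>\<^sub>0 nat) \<Rightarrow>\<^sub>0 bit"

definition var :: "nat \<Rightarrow> poly2" where
  "var a = Poly_Mapping.single (Poly_Mapping.single a 1) 1"

definition pmono :: "nat set \<Rightarrow> nat set \<Rightarrow> poly2" where
  "pmono \<alpha> \<beta> = (\<Prod>a\<in>\<alpha>. var a) * (\<Prod>b\<in>\<beta>. 1 - var b)"

definition is_pmono_pair :: "nat \<Rightarrow> nat set \<Rightarrow> nat set \<Rightarrow> bool" where
  "is_pmono_pair n \<alpha> \<beta> \<longleftrightarrow> \<alpha> \<subseteq> {1..n} \<and> \<beta> \<subseteq> {1..n} \<and> \<alpha> \<inter> \<beta> = {}"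

definition rho :: "nat \<Rightarrow> nat set \<Rightarrow> poly2" where
  "rho n \<gamma> = pmono \<gamma> ({1..n} - \<gamma>)"

definition neural_ideal :: "nat \<Rightarrow> nat set set \<Rightarrow> poly2 set" where
  "neural_ideal n C = {f. \<exists>h. f = (\<Sum>\<gamma>\<in>Pow {1..n} - C. h \<gamma> * rho n \<gamma>)}"

definition CF :: "nat \<Rightarrow> nat set set \<Rightarrow> (nat set \<times> nat set) set" where
  "CF n C = {(\<alpha>, \<beta>). is_pmono_pair n \<alpha> \<beta> \<and> pmono \<alpha> \<beta> \<in> neural_ideal n C \<and>
     (\<forall>\<alpha>' \<beta>'. is_pmono_pair n \<alpha>' \<beta>' \<and> pmono \<alpha>' \<beta>' \<in> neural_ideal n C \<and>
        pmono \<alpha>' \<beta>' dvd pmono \<alpha> \<beta> \<longrightarrow> pmono \<alpha>' \<beta>' = pmono \<alpha> \<beta>)}"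

definition is_code :: "nat \<Rightarrow> nat set set \<Rightarrow> bool" where
  "is_code n C \<longleftrightarrow> C \<subseteq> Pow {1..n} \<and> {} \<in> C \<and>
     (\<forall>i\<in>{1..n}. \<exists>c\<in>C. i \<in> c) \<and>
     (\<forall>a\<in>{1..n}. \<forall>b\<in>{1..n}. a \<noteq> b \<longrightarrow> {c\<in>C. a \<in> c} \<noteq> {c\<in>C. b \<in> c})"

definition degree_two :: "nat \<Rightarrow> nat set set \<Rightarrow> bool" where
  "degree_two n C \<longleftrightarrow> (\<forall>(\<alpha>, \<beta>)\<in>CF n C. card \<alpha> + card \<beta> = 2)"

definition G_edge :: "nat \<Rightarrow> nat set set \<Rightarrow> nat \<Rightarrow> nat \<Rightarrow> bool" where
  "G_edge n C a b \<longleftrightarrow> a \<in> {1..n} \<and> b \<in> {1..n} \<and> a \<noteq> b \<and>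
     \<not> (\<exists>(\<alpha>, \<beta>)\<in>CF n C. \<alpha> \<union> \<beta> = {a, b})"

definition P_less :: "nat \<Rightarrow> nat set set \<Rightarrow> nat \<Rightarrow> nat \<Rightarrow> bool" where
  "P_less n C a b \<longleftrightarrow> ({a}, {b}) \<in> CF n C"

definition Nbhd :: "nat \<Rightarrow> nat set set \<Rightarrow> nat \<Rightarrow> nat set" where
  "Nbhd n C a = {b. G_edge n C a b}"

definition Ibelow :: "nat \<Rightarrow> nat set set \<Rightarrow> nat \<Rightarrow> nat set" where
  "Ibelow n C a = {b. P_less n C b a}"

end

theory Submission
  imports Defs
begin

definition chi :: "nat set \<Rightarrow> (nat \<Rightarrow>\<^sub>0 nat) \<Rightarrow> bit" where
  "chi x m = (if Poly_Mapping.keys m \<subseteq> x then 1 else 0)"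

definition ev :: "nat set \<Rightarrow> poly2 \<Rightarrow> bit" where
  "ev x f = (\<Sum>m\<in>Poly_Mapping.keys f. Poly_Mapping.lookup f m * chi x m)"

lemma keys_add_nat: "Poly_Mapping.keys ((m1::nat \<Rightarrow>\<^sub>0 nat) + m2) = Poly_Mapping.keys m1 \<union> Poly_Mapping.keys m2"
  by (auto simp: in_keys_iff lookup_add)

lemma chi_add: "chi x (m1 + m2) = chi x m1 * chi x m2"
  by (auto simp: chi_def keys_add_nat)

lemma ev_superset:
  assumes "finite S" "Poly_Mapping.keys f \<subseteq> S"
  shows "ev x f = (\<Sum>m\<in>S. Poly_Mapping.lookup f m * chi x m)"
  unfolding ev_def
  by (rule sum.mono_neutral_left) (use assms in \<open>auto simp: in_keys_iff\<close>)

lemma ev_add: "ev x (f + g) = ev x f + ev x g"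
proof -
  let ?S = "Poly_Mapping.keys f \<union> Poly_Mapping.keys g"
  have "ev x (f + g) = (\<Sum>m\<in>?S. Poly_Mapping.lookup (f+g) m * chi x m)"
    by (rule ev_superset) (auto simp: in_keys_iff lookup_add)
  also have "\<dots> = (\<Sum>m\<in>?S. Poly_Mapping.lookup f m * chi x m) + (\<Sum>m\<in>?S. Poly_Mapping.lookup g m * chi x m)"
    by (simp only: lookup_add distrib_right sum.distrib)
  also have "\<dots> = ev x f + ev x g"
  proof -
    have e1: "ev x f = (\<Sum>m\<in>?S. Poly_Mapping.lookup f m * chi x m)" by (rule ev_superset) auto
    have e2: "ev x g = (\<Sum>m\<in>?S. Poly_Mapping.lookup g m * chi x m)" by (rule ev_superset) auto
    show ?thesis by (simp only: e1 e2)
  qed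
  finally show ?thesis .
qed

lemma ev_zero: "ev x 0 = 0"
  by (simp add: ev_def)

lemma ev_sum: "ev x (sum F A) = (\<Sum>a\<in>A. ev x (F a))"
  by (induction A rule: infinite_finite_induct) (auto simp: ev_zero ev_add)

lemma ev_single: "ev x (Poly_Mapping.single m c) = c * chi x m"
  by (cases "c = 0") (auto simp: ev_def)

lemma poly_expand: "f = (\<Sum>m\<in>Poly_Mapping.keys f. Poly_Mapping.single m (Poly_Mapping.lookup f m))"
  by (rule poly_mapping_eqI)
     (auto simp: lookup_sum lookup_single when_def in_keys_iff sum.delta' split: if_splits)

lemma ev_mult: "ev x (f * g) = ev x f * ev x g"
proof -
  have "f * g = (\<Sum>m\<in>Poly_Mapping.keys f. Poly_Mapping.single m (Poly_Mapping.lookup f m)) *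
                (\<Sum>m\<in>Poly_Mapping.keys g. Poly_Mapping.single m (Poly_Mapping.lookup g m))"
    using poly_expand[of f] poly_expand[of g] by simp
  also have "\<dots> = (\<Sum>m\<in>Poly_Mapping.keys f. \<Sum>m'\<in>Poly_Mapping.keys g.
      Poly_Mapping.single (m + m') (Poly_Mapping.lookup f m * Poly_Mapping.lookup g m'))"
    by (simp add: sum_product mult_single)
  finally have "ev x (f * g) = (\<Sum>m\<in>Poly_Mapping.keys f. \<Sum>m'\<in>Poly_Mapping.keys g.
      Poly_Mapping.lookup f m * Poly_Mapping.lookup g m' * chi x (m + m'))"
    by (simp add: ev_sum ev_single)
  also have "\<dots> = (\<Sum>m\<in>Poly_Mapping.keys f. \<Sum>m'\<in>Poly_Mapping.keys g.
      (Poly_Mapping.lookup f m * chi x m) * (Poly_Mapping.lookup g m' * chi x m'))"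
    by (intro sum.cong refl) (simp only: chi_add mult_ac)
  also have "\<dots> = ev x f * ev x g"
    by (simp only: ev_def sum_product)
  finally show ?thesis .
qed

lemma ev_one: "ev x 1 = 1"
proof -
  have "ev x (1::poly2) = ev x (Poly_Mapping.single 0 1)" by simp
  also have "\<dots> = 1 * chi x 0" by (rule ev_single)
  finally show ?thesis by (simp add: chi_def)
qed

lemma ev_uminus: "ev x (- f) = - ev x f"
proof -
  have "ev x f + ev x (- f) = ev x (f + - f)" by (rule ev_add[symmetric])
  also have "\<dots> = 0" by (simp only: add.right_inverse ev_zero)
  finally have "ev x f + ev x (- f) = 0" .
  then show ?thesis by (rule add.inverse_unique[symmetric])
qed

lemma ev_diff: "ev x (f - g) = ev x f - ev x g"
  by (simp only: diff_conv_add_uminus ev_add ev_uminus)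

lemma ev_prod: "ev x (prod F A) = (\<Prod>a\<in>A. ev x (F a))"
  by (induction A rule: infinite_finite_induct) (auto simp: ev_one ev_mult)

lemma ev_var: "ev x (var a) = (if a \<in> x then 1 else 0)"
  by (simp add: var_def ev_single chi_def)

lemma prod_ind: "finite A \<Longrightarrow> (\<Prod>a\<in>A. if P a then 1 else (0::bit)) = (if \<forall>a\<in>A. P a then 1 else 0)"
  by (induction A rule: finite_induct) auto

lemma ev_pmono:
  assumes "finite \<alpha>" "finite \<beta>"
  shows "ev x (pmono \<alpha> \<beta>) = (if \<alpha> \<subseteq> x \<and> \<beta> \<inter> x = {} then 1 else 0)"
proof -
  have "ev x (pmono \<alpha> \<beta>) = (\<Prod>a\<in>\<alpha>. if a \<in> x then 1 else 0) * (\<Prod>b\<in>\<beta>. if b \<notin> x then 1 else 0)"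
    unfolding pmono_def ev_mult ev_prod ev_diff ev_one ev_var
    by (intro arg_cong2[where f="(*)"] prod.cong) auto
  also have "\<dots> = (if \<alpha> \<subseteq> x \<and> \<beta> \<inter> x = {} then 1 else 0)"
    using assms by (simp add: prod_ind) blast
  finally show ?thesis .
qed

lemma pmono_dvd:
  assumes "finite \<alpha>" "finite \<beta>" "\<alpha> \<inter> \<beta> = {}" "finite \<alpha>'" "finite \<beta>'"
    and "pmono \<alpha>' \<beta>' dvd pmono \<alpha> \<beta>"
  shows "\<alpha>' \<subseteq> \<alpha> \<and> \<beta>' \<subseteq> \<beta>"
proof -
  obtain h where h: "pmono \<alpha> \<beta> = pmono \<alpha>' \<beta>' * h" using assms(6) by (auto simp: dvd_def)
  have key: "\<alpha>' \<subseteq> x \<and> \<beta>' \<inter> x = {}" if "\<alpha> \<subseteq> x" "\<beta> \<inter> x = {}" for x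
  proof -
    have "ev x (pmono \<alpha> \<beta>) = 1" using that assms by (simp add: ev_pmono)
    then have "ev x (pmono \<alpha>' \<beta>') \<noteq> 0" by (simp add: h ev_mult)
    then show ?thesis using assms by (simp add: ev_pmono split: if_splits)
  qed
  have "\<alpha>' \<subseteq> \<alpha>" using key[of \<alpha>] assms(3) by blast
  moreover have "\<beta>' \<subseteq> \<beta>"
  proof
    fix b assume b: "b \<in> \<beta>'"
    show "b \<in> \<beta>"
    proof (rule ccontr)
      assume "b \<notin> \<beta>"
      then have "\<beta> \<inter> insert b \<alpha> = {}" using assms(3) by blast
      then show False using key[of "insert b \<alpha>"] b by blast
    qed
  qed
  ultimately show ?thesis by blast
qed

lemma ideal_add: "f \<in> neural_ideal n C \<Longrightarrow> g \<in> neural_ideal n C \<Longrightarrow> f + g \<in> neural_ideal n C"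
  unfolding neural_ideal_def
proof (clarify)
  fix h1 h2
  show "\<exists>h. (\<Sum>\<gamma>\<in>Pow {1..n} - C. h1 \<gamma> * rho n \<gamma>) + (\<Sum>\<gamma>\<in>Pow {1..n} - C. h2 \<gamma> * rho n \<gamma>)
     = (\<Sum>\<gamma>\<in>Pow {1..n} - C. h \<gamma> * rho n \<gamma>)"
    by (rule exI[of _ "\<lambda>\<gamma>. h1 \<gamma> + h2 \<gamma>"]) (simp add: distrib_right sum.distrib)
qed

lemma ideal_mult: "f \<in> neural_ideal n C \<Longrightarrow> p * f \<in> neural_ideal n C"
  unfolding neural_ideal_def
proof (clarify)
  fix h1
  show "\<exists>h. p * (\<Sum>\<gamma>\<in>Pow {1..n} - C. h1 \<gamma> * rho n \<gamma>)
     = (\<Sum>\<gamma>\<in>Pow {1..n} - C. h \<gamma> * rho n \<gamma>)"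
    by (rule exI[of _ "\<lambda>\<gamma>. p * h1 \<gamma>"]) (simp add: sum_distrib_left mult.assoc)
qed

lemma ideal_ev_empty:
  assumes "{} \<in> C" "f \<in> neural_ideal n C"
  shows "ev {} f = 0"
proof -
  obtain h where f: "f = (\<Sum>\<gamma>\<in>Pow {1..n} - C. h \<gamma> * rho n \<gamma>)"
    using assms(2) by (auto simp: neural_ideal_def)
  have "ev {} (h \<gamma> * rho n \<gamma>) = 0" if "\<gamma> \<in> Pow {1..n} - C" for \<gamma>
  proof -
    have "finite \<gamma>" using that finite_subset by auto
    moreover have "\<gamma> \<noteq> {}" using that assms(1) by auto
    ultimately show ?thesis by (simp add: ev_mult rho_def ev_pmono)
  qed
  then show ?thesis by (simp add: f ev_sum)
qed

lemma exists_CF_below: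
  assumes "is_pmono_pair n \<alpha> \<beta>" "pmono \<alpha> \<beta> \<in> neural_ideal n C"
  shows "\<exists>\<alpha>' \<beta>'. (\<alpha>', \<beta>') \<in> CF n C \<and> \<alpha>' \<subseteq> \<alpha> \<and> \<beta>' \<subseteq> \<beta>"
proof -
  let ?P = "\<lambda>p. fst p \<subseteq> \<alpha> \<and> snd p \<subseteq> \<beta> \<and> pmono (fst p) (snd p) \<in> neural_ideal n C"
  let ?m = "\<lambda>p. card (fst p) + card (snd p)"
  have "?P (\<alpha>, \<beta>)" using assms by simp
  then obtain p where p: "?P p" and pmin: "\<forall>q. ?P q \<longrightarrow> ?m p \<le> ?m q"
    using ex_has_least_nat[of ?P "(\<alpha>, \<beta>)" ?m] by blast
  obtain a b where pab: "p = (a, b)" by (cases p)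
  have fin: "finite \<alpha>" "finite \<beta>" "\<alpha> \<inter> \<beta> = {}" using assms(1) finite_subset
    by (auto simp: is_pmono_pair_def)
  have ab: "a \<subseteq> \<alpha>" "b \<subseteq> \<beta>" "pmono a b \<in> neural_ideal n C" using p pab by auto
  have finab: "finite a" "finite b" "a \<inter> b = {}" using ab fin finite_subset by auto
  have "(a, b) \<in> CF n C"
    unfolding CF_def
  proof (clarsimp, intro conjI allI impI)
    show "is_pmono_pair n a b" using assms(1) ab by (auto simp: is_pmono_pair_def)
    show "pmono a b \<in> neural_ideal n C" by fact
    fix a' b' assume H: "is_pmono_pair n a' b' \<and> pmono a' b' \<in> neural_ideal n C \<and> pmono a' b' dvd pmono a b"
    have fa': "finite a'" "finite b'" using H finite_subset by (auto simp: is_pmono_pair_def)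
    have sub: "a' \<subseteq> a" "b' \<subseteq> b" using pmono_dvd[OF finab fa'] H by auto
    then have "?P (a', b')" using ab H by auto
    then have "?m p \<le> ?m (a', b')" using pmin by blast
    then have "card a + card b \<le> card a' + card b'" using pab by simp
    moreover have "card a' \<le> card a" "card b' \<le> card b" using sub finab by (auto intro: card_mono)
    ultimately have "card a' = card a" "card b' = card b" by auto
    then have "a' = a" "b' = b" using sub finab card_subset_eq by metis+
    then show "pmono a' b' = pmono a b" by simp
  qed
  then show ?thesis using ab by blast
qed

lemma pm2: "a \<noteq> b \<Longrightarrow> pmono {a, b} {} = var a * var b"
  by (simp add: pmono_def)

lemma pm11: "pmono {a} {b} = var a * (1 - var b)"
  by (simp add: pmono_def)

theorem lemma2p3:
  fixes n :: nat and C :: "nat set set" and i j :: nat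
  assumes "is_code n C"
    and "degree_two n C"
    and "i \<in> {1..n}" and "j \<in> {1..n}"
    and "P_less n C j i"
  shows "Nbhd n C j \<subseteq> Ibelow n C i \<union> Nbhd n C i"
proof
  fix k assume "k \<in> Nbhd n C j"
  then have Gjk: "G_edge n C j k" by (simp add: Nbhd_def)
  then have k: "k \<in> {1..n}" "j \<noteq> k" and noCF: "\<not> (\<exists>(\<alpha>, \<beta>)\<in>CF n C. \<alpha> \<union> \<beta> = {j, k})"
    by (auto simp: G_edge_def)
  have CFji: "({j}, {i}) \<in> CF n C" using assms(5) by (simp add: P_less_def)
  then have Jji: "pmono {j} {i} \<in> neural_ideal n C" by (simp add: CF_def)
  have ki: "k \<noteq> i"
  proof
    assume "k = i"
    then have "{j} \<union> {i} = {j, k}" by auto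
    then show False using noCF CFji by (simp only: Bex_def) blast
  qed
  have nojk: False if H: "is_pmono_pair n a0 b0" "pmono a0 b0 \<in> neural_ideal n C" "a0 \<union> b0 \<subseteq> {j, k}" for a0 b0
  proof -
    obtain a b where ab: "(a, b) \<in> CF n C" "a \<subseteq> a0" "b \<subseteq> b0"
      using exists_CF_below[OF H(1,2)] by blast
    have c2: "card a + card b = 2" using ab(1) assms(2) by (auto simp: degree_two_def)
    have disj: "a \<inter> b = {}" using ab(1) by (auto simp: CF_def is_pmono_pair_def)
    have sub: "a \<union> b \<subseteq> {j, k}" using ab H(3) by blast
    then have fin: "finite a" "finite b" using finite_subset by auto
    have "card (a \<union> b) = 2" using c2 disj fin card_Un_disjoint by metis
    moreover have "card {j, k} = 2" using k(2) by simp
    ultimately have "a \<union> b = {j, k}" using sub card_subset_eq by (metis finite.emptyI finite.insertI)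
    then show False using noCF ab(1) by blast
  qed
  show "k \<in> Ibelow n C i \<union> Nbhd n C i"
  proof (cases "G_edge n C i k")
    case True then show ?thesis by (simp add: Nbhd_def)
  next
    case False
    then obtain \<alpha> \<beta> where ab: "(\<alpha>, \<beta>) \<in> CF n C" "\<alpha> \<union> \<beta> = {i, k}"
      using assms(3) k ki by (auto simp: G_edge_def)
    have pair: "is_pmono_pair n \<alpha> \<beta>" and J: "pmono \<alpha> \<beta> \<in> neural_ideal n C"
      using ab(1) by (auto simp: CF_def)
    have disj: "\<alpha> \<inter> \<beta> = {}" using pair by (simp add: is_pmono_pair_def)
    have pj: "is_pmono_pair n {j, k} {}" "is_pmono_pair n {j} {k}"
      using assms(4) k by (auto simp: is_pmono_pair_def)
    consider "\<alpha> = {i, k}" "\<beta> = {}" | "\<alpha> = {i}" "\<beta> = {k}" | "\<alpha> = {k}" "\<beta> = {i}" | "\<alpha> = {}" "\<beta> = {i, k}"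
    proof -
      have as: "\<alpha> \<subseteq> {i, k}" and bs: "\<beta> = {i, k} - \<alpha>" using ab(2) disj by blast+
      show ?thesis
      proof (cases "i \<in> \<alpha>"; cases "k \<in> \<alpha>")
        assume "i \<in> \<alpha>" "k \<in> \<alpha>"
        then have "\<alpha> = {i, k}" using as by blast
        then show ?thesis using that(1) bs by simp
      next
        assume "i \<in> \<alpha>" "k \<notin> \<alpha>"
        then have "\<alpha> = {i}" using as by blast
        then show ?thesis using that(2) bs ki by auto
      next
        assume "i \<notin> \<alpha>" "k \<in> \<alpha>"
        then have "\<alpha> = {k}" using as by blast
        then show ?thesis using that(3) bs ki by auto
      next
        assume "i \<notin> \<alpha>" "k \<notin> \<alpha>"
        then have "\<alpha> = {}" using as by blast
        then show ?thesis using that(4) bs by simp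
      qed
    qed
    then show ?thesis
    proof cases
      case 1
      have "var i * var k \<in> neural_ideal n C" using J 1 ki by (simp add: pm2)
      then have "var j * (var i * var k) \<in> neural_ideal n C" by (rule ideal_mult)
      moreover have "var k * pmono {j} {i} \<in> neural_ideal n C" using Jji by (rule ideal_mult)
      ultimately have "var k * pmono {j} {i} + var j * (var i * var k) \<in> neural_ideal n C"
        by (rule ideal_add[rotated])
      moreover have "var k * pmono {j} {i} + var j * (var i * var k) = pmono {j, k} {}"
        using k(2) by (simp add: pm2 pm11 algebra_simps)
      ultimately show ?thesis using nojk[OF pj(1)] by auto
    next
      case 2
      have "var i * (1 - var k) \<in> neural_ideal n C" using J 2 by (simp add: pm11)
      then have "var j * (var i * (1 - var k)) \<in> neural_ideal n C" by (rule ideal_mult)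
      moreover have "(1 - var k) * pmono {j} {i} \<in> neural_ideal n C" using Jji by (rule ideal_mult)
      ultimately have "(1 - var k) * pmono {j} {i} + var j * (var i * (1 - var k)) \<in> neural_ideal n C"
        by (rule ideal_add[rotated])
      moreover have "(1 - var k) * pmono {j} {i} + var j * (var i * (1 - var k)) = pmono {j} {k}"
        by (simp add: pm11 algebra_simps)
      ultimately show ?thesis using nojk[OF pj(2)] by auto
    next
      case 3
      then show ?thesis using ab(1) by (simp add: Ibelow_def P_less_def)
    next
      case 4
      have "ev {} (pmono \<alpha> \<beta>) = 0"
        using ideal_ev_empty[OF _ J] assms(1) by (simp add: is_code_def)
      moreover have "ev {} (pmono \<alpha> \<beta>) = 1" using 4 by (simp add: ev_pmono)
      ultimately show ?thesis by simp
    qed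
  qed
qed

end
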